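(* For every integer $n\ge 2$, $$C_n=\frac{n+2}{2(n-1)\pi}\int_0^{\infty}\frac{t^2}{\left(t^2+\frac14\right)^{5/2}}\left[\left(2+\frac{1}{\sqrt{t^2+\frac14}}\right)^{n-1}-\left(2-\frac{1}{\sqrt{t^2+\frac14}}\right)^{n-1}\right]\mathrm{d}t .$$
   Context: $C_n=\frac{1}{n+1}\binom{2n}{n}$ denotes the $n$-th Catalan number ($n\ge 0$). *)

theory Defs
  imports "HOL-Analysis.Analysis"
begin

definition catalan :: "nat \<Rightarrow> real" where
  "catalan n = real ((2*n) choose n) / real (n + 1)"

end

theory Submission
  imports Defs
begin


lemma catalan_fact: "catalan m = fact (2*m) / (fact m * fact m * (real m + 1))"
proof -
  have le: "m \<le> 2*m" by simp
  have e: "2*m - m = m" by simp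
  have a: "real ((2*m) choose m) = fact (2*m) / (fact m * fact m)"
    using binomial_fact[OF le] unfolding e by simp
  show ?thesis unfolding catalan_def a by simp
qed
lemma alg3:
  assumes "(F::real) \<noteq> 0" "(x::real) + 1 \<noteq> 0" "x + 2 \<noteq> 0"
  shows "(2*x+2)*(2*x+1)*G / ((x+1)*F*((x+1)*F)*(x+2)) = G / (F*F*(x+1)) * (2*(2*x+1)) / (x+2)"
proof -
  have "(2*x+2)*(2*x+1)*G / ((x+1)*F*((x+1)*F)*(x+2)) = ((x+1) * (2*(2*x+1)*G)) / ((x+1) * ((x+1)*F*F*(x+2)))"
  proof -
    have n: "(2*x+2)*(2*x+1)*G = (x+1)*(2*(2*x+1)*G)" by (simp add: algebra_simps)
    have d: "(x+1)*F*((x+1)*F)*(x+2) = (x+1)*((x+1)*F*F*(x+2))" by (simp only: mult_ac)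
    show ?thesis unfolding n d ..
  qed
  also have "\<dots> = (2*(2*x+1)*G) / ((x+1)*F*F*(x+2))"
    by (rule mult_divide_mult_cancel_left) (rule assms)
  also have "\<dots> = G / (F*F*(x+1)) * (2*(2*x+1)) / (x+2)"
    by (simp add: mult_ac)
  finally show ?thesis .
qed

lemma catalan_Suc: "catalan (Suc m) = catalan m * (2*(2*real m+1)) / (real m+2)"
proof -
  have c: "fact (2*Suc m) = (2*real m+2)*(2*real m+1)*(fact (2*m)::real)"
  proof -
    have "2*Suc m = Suc (Suc (2*m))" by simp
    then have "fact (2*Suc m) = (fact (Suc (Suc (2*m))) :: real)" by (simp only:)
    also have "\<dots> = real (Suc (Suc (2*m))) * (real (Suc (2*m)) * fact (2*m))" by (simp only: fact_Suc of_nat_mult)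
    also have "\<dots> = (2*real m+2)*(2*real m+1)*(fact (2*m)::real)" by (simp add: algebra_simps)
    finally show ?thesis .
  qed
  have d: "fact (Suc m) = (real m+1) * (fact m :: real)" by simp
  have e2: "real (Suc m) + 1 = real m + 2" by simp
  have "catalan (Suc m) = fact (2*Suc m) / (fact (Suc m) * fact (Suc m) * (real (Suc m) + 1))"
    by (rule catalan_fact)
  also have "\<dots> = (2*real m+2)*(2*real m+1)*fact (2*m) / ((real m+1)*fact m*((real m+1)*fact m)*(real m+2))"
    unfolding c d e2 ..
  also have "\<dots> = fact (2*m) / (fact m * fact m * (real m+1)) * (2*(2*real m+1)) / (real m+2)"
    by (rule alg3) auto
  also have "\<dots> = catalan m * (2*(2*real m+1)) / (real m+2)" unfolding catalan_fact ..
  finally show ?thesis .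
qed

lemma Gamma_3half: "Gamma (3/2::real) = sqrt pi / 2"
proof -
  have "Gamma (1/2 + 1 :: real) = 1/2 * Gamma (1/2)"
  proof (subst Gamma_plus1)
    show "1/2 \<notin> (\<int>\<^sub>\<le>\<^sub>0 :: real set)"
    proof
      assume "1/2 \<in> (\<int>\<^sub>\<le>\<^sub>0 :: real set)"
      then obtain n where "(1/2::real) = of_int n" by (auto elim: nonpos_Ints_cases)
      then have "real_of_int (2*n) = real_of_int 1" by simp
      then have "2*n = 1" by (simp only: of_int_eq_iff)
      then show False by presburger
    qed
  qed simp
  then show ?thesis by (simp add: Gamma_one_half_real)
qed

lemma beta_cat: "4^(k+2) * Beta (real k+3/2) (3/2) = 2*pi*catalan (k+1)"
proof (induction k)
  case 0
  have g3: "Gamma (3::real) = 2"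
    using Gamma_fact[of 2] by (simp add: numeral_eq_Suc)
  show ?case by (simp add: Beta_def Gamma_3half g3 catalan_def)
next
  case (Suc k)
  have nz: "real k + 3/2 \<notin> \<int>\<^sub>\<le>\<^sub>0"
    by (auto elim!: nonpos_Ints_cases) 
  have r: "(real k + 3/2 + 3/2) * Beta (real k + 3/2 + 1) (3/2) = (real k + 3/2) * Beta (real k + 3/2) (3/2)"
    by (rule Beta_plus1_left[OF nz])
  have e: "real (Suc k) + 3/2 = real k + 3/2 + 1" by simp
  have "Beta (real (Suc k) + 3/2) (3/2) = (real k + 3/2) / (real k + 3) * Beta (real k + 3/2) (3/2)"
    using r unfolding e by (simp add: field_simps)
  then have "4^(Suc k+2) * Beta (real (Suc k)+3/2) (3/2) = (4*(real k + 3/2) / (real k + 3)) * (4^(k+2) * Beta (real k + 3/2) (3/2))"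
    by (simp add: field_simps)
  also have "\<dots> = (4*(real k + 3/2) / (real k + 3)) * (2*pi*catalan (k+1))" using Suc.IH by simp
  also have "\<dots> = 2*pi*(catalan (Suc k) * (2*(2*real (Suc k)+1)) / (real (Suc k)+2))"
    by (simp add: field_simps)
  also have "\<dots> = 2*pi*catalan (Suc k+1)" using catalan_Suc[of "Suc k"] by simp
  finally show ?case .
qed


lemma powr_half_int: "0 \<le> (y::real) \<Longrightarrow> y powr (real j + 1/2) = y^j * sqrt y"
proof (cases "y = 0")
  case False
  assume "0 \<le> y" with False have "y > 0" by simp
  then show ?thesis by (simp add: powr_add powr_realpow powr_half_sqrt)
qed simp

lemma p_beta:
  fixes k :: nat
  defines "p \<equiv> (\<lambda>u::real. u/2 * sqrt (4 - u^2) * (2+u)^k)"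
  shows "(p has_integral 4^(k+2) * (2*Beta (real k+5/2) (3/2) - Beta (real k+3/2) (3/2))) {-2..2}"
proof -
  have B1: "((\<lambda>y. y powr (real k+5/2-1) * (1-y) powr (3/2-1)) has_integral Beta (real k+5/2) (3/2)) {0..1}"
    by (rule has_integral_Beta_real) auto
  have B0: "((\<lambda>y. y powr (real k+3/2-1) * (1-y) powr (3/2-1)) has_integral Beta (real k+3/2) (3/2)) {0..1}"
    by (rule has_integral_Beta_real) auto
  have Q: "((\<lambda>y. 4^(k+1) * (2 * (y powr (real k+5/2-1) * (1-y) powr (3/2-1)) - y powr (real k+3/2-1) * (1-y) powr (3/2-1)))
     has_integral 4^(k+1) * (2*Beta (real k+5/2) (3/2) - Beta (real k+3/2) (3/2))) {0..1}"
    by (intro has_integral_mult_right has_integral_diff B0 B1)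
  have eq: "4^(k+1) * (2 * (y powr (real k+5/2-1) * (1-y) powr (3/2-1)) - y powr (real k+3/2-1) * (1-y) powr (3/2-1))
      = p (4 * y + -2)" if y: "y \<in> {0..1}" for y
  proof -
    from y have y0: "0 \<le> y" and y1: "0 \<le> 1 - y" by auto
    have e1: "y powr (real k+5/2-1) = y^(k+1) * sqrt y"
      using powr_half_int[OF y0, of "k+1"] by (simp add: algebra_simps)
    have e0: "y powr (real k+3/2-1) = y^k * sqrt y"
      using powr_half_int[OF y0, of "k"] by (simp add: algebra_simps)
    have e2: "(1-y) powr (3/2-1) = sqrt (1-y)"
      using powr_half_sqrt[OF y1] by simp
    have s: "sqrt (4 - (4*y + -2)^2) = 4 * sqrt y * sqrt (1-y)"
    proof -
      have "4 - (4*y + -2)^2 = 4^2 * (y * (1-y))" by (simp add: algebra_simps power2_eq_square)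
      then show ?thesis by (simp add: real_sqrt_mult)
    qed
    show ?thesis unfolding p_def e1 e0 e2 s
      by (simp add: power_mult_distrib algebra_simps)
  qed
  have Q': "((\<lambda>y. p (4 * y + -2)) has_integral 4^(k+1) * (2*Beta (real k+5/2) (3/2) - Beta (real k+3/2) (3/2))) {0..1}"
    by (rule has_integral_eq[OF eq Q])
  have "((\<lambda>x. p (4 *\<^sub>R x + -2)) has_integral ((4^(k+2) * (2*Beta (real k+5/2) (3/2) - Beta (real k+3/2) (3/2))) /\<^sub>R 4 ^ DIM(real)))
     (cbox ((-2 - -2) /\<^sub>R 4) ((2 - -2) /\<^sub>R 4)) \<longleftrightarrow> (p has_integral (4^(k+2) * (2*Beta (real k+5/2) (3/2) - Beta (real k+3/2) (3/2)))) (cbox (-2) 2)"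
    by (rule has_integral_affinity_iff) simp
  moreover have "((\<lambda>x. p (4 *\<^sub>R x + -2)) has_integral ((4^(k+2) * (2*Beta (real k+5/2) (3/2) - Beta (real k+3/2) (3/2))) /\<^sub>R 4 ^ DIM(real)))
     (cbox ((-2 - -2) /\<^sub>R 4) ((2 - -2) /\<^sub>R 4))"
    using Q' by (simp add: mult.assoc)
  ultimately show ?thesis by simp
qed

lemma h_beta:
  fixes k :: nat
  shows "((\<lambda>u::real. u/2 * sqrt (4 - u^2) * ((2+u)^k - (2-u)^k)) has_integral 4^(k+2) * (2*Beta (real k+5/2) (3/2) - Beta (real k+3/2) (3/2))) {0..2}"
proof -
  define p where "p \<equiv> (\<lambda>u::real. u/2 * sqrt (4 - u^2) * (2+u)^k)"
  define I where "I = 4^(k+2) * (2*Beta (real k+5/2) (3/2) - Beta (real k+3/2) (3/2))"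
  have P: "(p has_integral I) {-2..2}" unfolding p_def I_def by (rule p_beta)
  have cp: "continuous_on UNIV p" unfolding p_def by (intro continuous_intros) auto
  have i1: "p integrable_on {-2..0}" by (rule integrable_continuous_interval) (rule continuous_on_subset[OF cp], simp)
  have i2: "p integrable_on {0..2}" by (rule integrable_continuous_interval) (rule continuous_on_subset[OF cp], simp)
  have "(p has_integral (integral {-2..0} p + integral {0..2} p)) {-2..2}"
    using has_integral_combine[OF _ _ integrable_integral[OF i1] integrable_integral[OF i2]] by simp
  then have sum: "integral {-2..0} p + integral {0..2} p = I" using P by (rule has_integral_unique)
  have r: "((\<lambda>u. p (-u)) has_integral integral {-2..0} p) {0..2}"
    using has_integral_reflect_lemma_real[OF integrable_integral[OF i1]] by simp
  have "((\<lambda>u. p u + p (-u)) has_integral (integral {0..2} p + integral {-2..0} p)) {0..2}"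
    by (intro has_integral_add r) (use i2 in auto)
  moreover have "(\<lambda>u. p u + p (-u)) = (\<lambda>u::real. u/2 * sqrt (4 - u^2) * ((2+u)^k - (2-u)^k))"
    by (rule ext) (simp add: p_def algebra_simps)
  ultimately show ?thesis using sum unfolding I_def by (simp add: add.commute)
qed


lemma alg1: "(s::real) > 0 \<Longrightarrow> - (inverse s / 2 * (2*t) * inverse (s ^ Suc (Suc 0))) = - t / s^3"
  by (simp add: field_simps power3_eq_cube)

lemma improper:
  fixes k :: nat
  defines "h \<equiv> (\<lambda>u::real. u/2 * sqrt (4 - u^2) * ((2+u)^k - (2-u)^k))"
  defines "f \<equiv> (\<lambda>t::real. t^2 / (t^2 + 1/4) powr (5/2) *
             ((2 + 1 / sqrt (t^2 + 1/4)) ^ k - (2 - 1 / sqrt (t^2 + 1/4)) ^ k))"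
  shows "(f has_integral integral {0..2} h) {0..}"
proof -
  define \<Phi> where "\<Phi> = (\<lambda>v. integral {-3..v} h)"
  define u where "u = (\<lambda>t::real. 1 / sqrt (t^2 + 1/4))"
  have uu: "u = (\<lambda>t. inverse (sqrt (t^2+1/4)))" unfolding u_def by (rule ext) (simp only: inverse_eq_divide)
  define F where "F = (\<lambda>t. \<Phi> 2 - \<Phi> (u t))"
  have hc: "continuous_on UNIV h" unfolding h_def by (intro continuous_intros) auto
  have hc3: "continuous_on {-3..3} h" by (rule continuous_on_subset[OF hc]) simp
  have \<Phi>d: "(\<Phi> has_real_derivative h v) (at v)" if "v \<in> {-3<..<3}" for v
  proof -
    have "(\<Phi> has_real_derivative h v) (at v within {-3..3})"
      unfolding \<Phi>_def by (rule integral_has_real_derivative[OF hc3]) (use that in auto)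
    moreover have "at v within {-3..3} = at v"
      by (rule at_within_interior) (use that in simp)
    ultimately show ?thesis by simp
  qed
  have \<Phi>c: "isCont \<Phi> v" if "v \<in> {-3<..<3}" for v
    using \<Phi>d[OF that] by (rule DERIV_isCont)
  have tq: "0 < t^2 + 1/4" for t :: real using zero_le_power2[of t] by linarith
  have s_pos: "sqrt (t^2 + 1/4) > 0" for t :: real using tq[of t] by simp
  have u_bounds: "0 < u t \<and> u t < 2" if "t > 0" for t
  proof -
    have "sqrt (t^2+1/4) > sqrt (1/4)" using that by (intro real_sqrt_less_mono) simp
    then have "sqrt (t^2+1/4) > 1/2" by (simp add: real_sqrt_divide)
    then show ?thesis unfolding u_def using s_pos[of t] by (simp add: field_simps)
  qed
  have ud: "(u has_real_derivative (- t / (sqrt (t^2+1/4))^3)) (at t)" for t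
  proof -
    have d0: "((\<lambda>t. t^2 + 1/4) has_real_derivative 2*t) (at t)"
      by (auto intro!: derivative_eq_intros)
    have d1: "((\<lambda>t. sqrt (t^2+1/4)) has_real_derivative inverse (sqrt (t^2+1/4)) / 2 * (2*t)) (at t)"
      by (rule DERIV_chain2[OF DERIV_real_sqrt[OF tq] d0])
    have d2: "((\<lambda>t. inverse (sqrt (t^2+1/4))) has_real_derivative - ((inverse (sqrt (t^2+1/4)) / 2 * (2*t)) * inverse ((sqrt (t^2+1/4))^Suc (Suc 0)))) (at t)"
      by (rule DERIV_inverse_fun[OF d1]) (use s_pos[of t] in auto)
    have eq: "- ((inverse (sqrt (t^2+1/4)) / 2 * (2*t)) * inverse ((sqrt (t^2+1/4))^Suc (Suc 0))) = - t / (sqrt (t^2+1/4))^3"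
      using alg1[OF s_pos[of t]] by simp
    show ?thesis unfolding uu eq[symmetric] by (rule d2)
  qed
  have Fd: "(F has_real_derivative f t) (at t)" if "t > 0" for t
  proof -
    have c: "((\<lambda>z. \<Phi> (u z)) has_real_derivative h (u t) * (- t / (sqrt (t^2+1/4))^3)) (at t)"
      by (rule DERIV_chain2[OF \<Phi>d ud]) (use u_bounds[OF that] in auto)
    have "(F has_real_derivative 0 - h (u t) * (- t / (sqrt (t^2+1/4))^3)) (at t)"
      unfolding F_def by (rule DERIV_diff[OF DERIV_const c])
    then have "(F has_real_derivative (- (h (u t) * (- t / (sqrt (t^2+1/4))^3)))) (at t)" by simp
    moreover have "- (h (u t) * (- t / (sqrt (t^2+1/4))^3)) = f t"
    proof -
      define s where "s = sqrt (t^2+1/4)"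
      have s0: "s > 0" using s_pos[of t] by (simp add: s_def)
      have s2: "s^2 = t^2 + 1/4" unfolding s_def by simp
      have p52: "(t^2 + 1/4) powr (5/2) = s^5"
      proof -
        have "(t^2 + 1/4) powr (5/2) = ((t^2 + 1/4) powr (1/2)) powr 5"
          by (simp add: powr_powr)
        also have "\<dots> = s^5" unfolding s_def using s_pos[of t]
          by (simp add: powr_half_sqrt add_nonneg_nonneg powr_realpow)
        finally show ?thesis .
      qed
      have sq: "sqrt (4 - (1/s)^2) = 2*t/s"
      proof -
        have "4 - (1/s)^2 = (2*t/s)^2" using s0 s2 by (simp add: field_simps)
        then show ?thesis using that s0 by simp
      qed
      show ?thesis unfolding f_def h_def u_def s_def[symmetric] p52 sq
        using s0 by (simp add: field_simps power2_eq_square power3_eq_cube eval_nat_numeral)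
    qed
    ultimately show ?thesis by simp
  qed
  have fc: "isCont f t" if "t > 0" for t
    unfolding f_def using s_pos[of t] tq[of t] by (intro continuous_intros) auto
  have fnn: "0 \<le> f t" if "t > 0" for t
  proof -
    have a: "0 \<le> 2 - u t" "2 - u t \<le> 2 + u t" using u_bounds[OF that] by auto
    have "(2 - u t)^k \<le> (2 + u t)^k" by (rule power_mono[OF a(2) a(1)])
    then have "0 \<le> t^2 / (t^2+1/4) powr (5/2) * ((2 + u t)^k - (2 - u t)^k)"
      by (intro mult_nonneg_nonneg divide_nonneg_nonneg) auto
    moreover have "f t = t^2 / (t^2+1/4) powr (5/2) * ((2 + u t)^k - (2 - u t)^k)"
      by (simp only: f_def u_def)
    ultimately show ?thesis by simp
  qed
  have lim0: "((F \<circ> real_of_ereal) \<longlongrightarrow> 0) (at_right 0)"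
  proof -
    have "((\<lambda>t. \<Phi> (u t)) \<longlongrightarrow> \<Phi> (u 0)) (at 0)"
    proof (rule isCont_tendsto_compose[where g=\<Phi>])
      show "isCont \<Phi> (u 0)" by (rule \<Phi>c) (simp add: u_def real_sqrt_divide)
      show "(u \<longlongrightarrow> u 0) (at 0)" using ud[of 0] DERIV_isCont isCont_def by blast
    qed
    then have "((\<lambda>t. \<Phi> (u t)) \<longlongrightarrow> \<Phi> 2) (at_right 0)"
      by (simp add: u_def real_sqrt_divide filterlim_at_split)
    then have "(F \<longlongrightarrow> \<Phi> 2 - \<Phi> 2) (at_right 0)" unfolding F_def by (intro tendsto_intros)
    then show ?thesis by (simp add: zero_ereal_def ereal_tendsto_simps)
  qed
  have limI: "((F \<circ> real_of_ereal) \<longlongrightarrow> \<Phi> 2 - \<Phi> 0) (at_left \<infinity>)"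
  proof -
    have "filterlim (\<lambda>t::real. sqrt (t^2 + 1/4)) at_top at_top"
      by (rule filterlim_at_top_mono[OF filterlim_ident]) (rule always_eventually, auto intro!: real_le_rsqrt)
    then have "((\<lambda>t::real. inverse (sqrt (t^2 + 1/4))) \<longlongrightarrow> 0) at_top"
      by (rule tendsto_inverse_0_at_top)
    then have "(u \<longlongrightarrow> 0) at_top" unfolding uu .
    have c0: "isCont \<Phi> 0" by (rule \<Phi>c) simp
    note \<open>(u \<longlongrightarrow> 0) at_top\<close>
    then have "((\<lambda>t. \<Phi> (u t)) \<longlongrightarrow> \<Phi> 0) at_top"
      by (rule isCont_tendsto_compose[OF c0])
    then have "(F \<longlongrightarrow> \<Phi> 2 - \<Phi> 0) at_top" unfolding F_def by (intro tendsto_intros)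
    then show ?thesis by (simp add: ereal_tendsto_simps)
  qed
  have FTC: "set_integrable lborel (einterval 0 \<infinity>) f" "(LBINT x=0..\<infinity>. f x) = (\<Phi> 2 - \<Phi> 0) - 0"
    by (rule interval_integral_FTC_nonneg[OF _ _ _ _ lim0 limI];
        auto simp: zero_ereal_def intro: Fd fc fnn)+
  have v: "\<Phi> 2 - \<Phi> 0 = integral {0..2} h"
  proof -
    have i1: "h integrable_on {-3..0}" by (rule integrable_continuous_interval) (rule continuous_on_subset[OF hc], simp)
    have i2: "h integrable_on {0..2}" by (rule integrable_continuous_interval) (rule continuous_on_subset[OF hc], simp)
    have "(h has_integral (integral {-3..0} h + integral {0..2} h)) {-3..2}"
      using has_integral_combine[OF _ _ integrable_integral[OF i1] integrable_integral[OF i2]] by simp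
    then show ?thesis unfolding \<Phi>_def by (simp add: integral_unique)
  qed
  have e: "einterval 0 \<infinity> = {0::real<..}" by (simp add: zero_ereal_def)
  have "(f has_integral integral {0..2} h) {0<..}"
  proof -
    have "f integrable_on einterval 0 \<infinity>" "(LINT x : einterval 0 \<infinity> | lborel. f x) = integral (einterval 0 \<infinity>) f"
      using set_borel_integral_eq_integral[OF FTC(1)] by auto
    moreover have "(LBINT x=0..\<infinity>. f x) = (LINT x : einterval 0 \<infinity> | lborel. f x)"
      by (simp add: interval_lebesgue_integral_def)
    ultimately show ?thesis using FTC(2) v e by (metis diff_zero has_integral_integrable_integral)
  qed
  moreover have "(f has_integral integral {0..2} h) {0<..} \<longleftrightarrow> (f has_integral integral {0..2} h) {0..}"
    by (rule has_integral_spike_set_eq) (auto intro: negligible_subset[of "{0}"])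
  ultimately show ?thesis by simp
qed

lemma alg2a:
  assumes "(k::real) \<noteq> 0" "k + 3 \<noteq> 0" "(c::real) \<noteq> 0"
  shows "(k + 3) / (k * c) * (X * (k / (k + 3))) = X / c"
  using assms by simp
lemma alg2: "(k::real) > 0 \<Longrightarrow> (k + 3) / (2 * k * pi) * (X * (k / (k + 3))) = X / (2*pi)"
proof -
  assume k: "k > 0"
  have "(k + 3) / (k * (2*pi)) * (X * (k / (k + 3))) = X / (2*pi)"
    by (rule alg2a) (use k in auto)
  moreover have "2 * k * pi = k * (2*pi)" by (simp only: mult_ac)
  ultimately show ?thesis by (simp only:)
qed

theorem mainTheorem2:
  fixes n :: nat
  assumes "n \<ge> 2"
  shows "((\<lambda>t::real. (real n + 2) / (2 * (real n - 1) * pi) *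
            (t^2 / (t^2 + 1/4) powr (5/2) *
             ((2 + 1 / sqrt (t^2 + 1/4)) ^ (n - 1) - (2 - 1 / sqrt (t^2 + 1/4)) ^ (n - 1))))
          has_integral catalan n) {0..}"
proof -
  define k where "k = n - 1"
  have nk: "n = k + 1" and k1: "k \<ge> 1" using assms unfolding k_def by auto
  define B0 where "B0 = Beta (real k+3/2) (3/2)"
  define B1 where "B1 = Beta (real k+5/2) (3/2)"
  have I: "integral {0..2} (\<lambda>u::real. u/2 * sqrt (4 - u^2) * ((2+u)^k - (2-u)^k)) = 4^(k+2) * (2*B1 - B0)"
    unfolding B0_def B1_def by (rule integral_unique[OF h_beta])
  have nz: "real k + 3/2 \<notin> \<int>\<^sub>\<le>\<^sub>0"
    by (auto elim!: nonpos_Ints_cases)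
  have r: "(real k + 3/2 + 3/2) * Beta (real k + 3/2 + 1) (3/2) = (real k + 3/2) * Beta (real k + 3/2) (3/2)"
    by (rule Beta_plus1_left[OF nz])
  have e: "real k + 5/2 = real k + 3/2 + 1" by simp
  have b1: "B1 = (real k + 3/2) / (real k + 3) * B0"
    using r unfolding B1_def B0_def e by (simp add: field_simps)
  have bc: "4^(k+2) * B0 = 2*pi*catalan (k+1)" unfolding B0_def by (rule beta_cat)
  have "(real n + 2) / (2 * (real n - 1) * pi) * (4^(k+2) * (2*B1 - B0))
        = (real k + 3) / (2 * real k * pi) * (4^(k+2) * B0 * (real k / (real k + 3)))"
  proof -
    have n2: "real n + 2 = real k + 3" "real n - 1 = real k" by (simp_all add: nk)
    have k3: "real k + 3 \<noteq> 0" by simp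
    have d: "2*B1 - B0 = B0 * (real k / (real k + 3))"
      unfolding b1 using k3 by (simp add: field_simps)
    show ?thesis unfolding n2 d by (simp only: mult.assoc)
  qed
  also have "\<dots> = 4^(k+2) * B0 / (2*pi)" using k1 by (intro alg2) simp
  also have "\<dots> = catalan n" unfolding bc nk by simp
  finally have C: "(real n + 2) / (2 * (real n - 1) * pi) * (4^(k+2) * (2*B1 - B0)) = catalan n" .
  have "((\<lambda>t::real. (real n + 2) / (2 * (real n - 1) * pi) *
            (t^2 / (t^2 + 1/4) powr (5/2) *
             ((2 + 1 / sqrt (t^2 + 1/4)) ^ k - (2 - 1 / sqrt (t^2 + 1/4)) ^ k)))
          has_integral (real n + 2) / (2 * (real n - 1) * pi) * (4^(k+2) * (2*B1 - B0))) {0..}"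
    using has_integral_mult_right[OF improper[of k], where c="(real n + 2) / (2 * (real n - 1) * pi)", unfolded I] .
  then have F: "((\<lambda>t::real. (real n + 2) / (2 * (real n - 1) * pi) *
            (t^2 / (t^2 + 1/4) powr (5/2) *
             ((2 + 1 / sqrt (t^2 + 1/4)) ^ k - (2 - 1 / sqrt (t^2 + 1/4)) ^ k)))
          has_integral catalan n) {0..}" unfolding C .
  then show ?thesis unfolding k_def .
qed

end
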